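(* Let $\mathbb{F}$ be a field and $n\ge2$. Let $\mathcal{A}$ be a nonempty set of $(n-1)$-dimensional subspaces of $\mathbb{F}^n$ and $\mathcal{B}$ a nonempty set of $1$-dimensional subspaces of $\mathbb{F}^n$ such that $V_1\not\subseteq V_2$ for all $V_1\in\mathcal{B}$ and $V_2\in\mathcal{A}$. Then $S(\mathcal{A},\mathcal{B})=\{A\in M(n,\mathbb{F}) : \mathrm{Im}(A)\in\mathcal{A},\ \ker(A)\in\mathcal{B}\}$ is an isolated subsemigroup of $M(n,\mathbb{F})$.
   Context: $M(n,\mathbb{F})$ is the semigroup of $n\times n$ matrices over $\mathbb{F}$ under multiplication, identified with linear operators on $\mathbb{F}^n$. A subsemigroup $T$ of a semigroup $S$ is isolated if for all $x\in S$ and all positive integers $m$, $x^m\in T$ implies $x\in T$. *)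

theory Defs
  imports "HOL-Analysis.Analysis"
begin

definition mat_pow :: "'a::semiring_1^'n^'n \<Rightarrow> nat \<Rightarrow> 'a^'n^'n" where
  "mat_pow X m = (((**) X) ^^ m) (mat 1)"

definition img :: "'a::semiring_1^'n^'n \<Rightarrow> ('a^'n) set" where
  "img A = range (\<lambda>x. A *v x)"

definition ker :: "'a::semiring_1^'n^'n \<Rightarrow> ('a^'n) set" where
  "ker A = {x. A *v x = 0}"

definition matrix_subsemigroup :: "('a::semiring_1^'n^'n) set \<Rightarrow> bool" where
  "matrix_subsemigroup T \<longleftrightarrow> T \<noteq> {} \<and> (\<forall>A\<in>T. \<forall>B\<in>T. A ** B \<in> T)"

definition isolated :: "('a::semiring_1^'n^'n) set \<Rightarrow> bool" where
  "isolated T \<longleftrightarrow> (\<forall>X. \<forall>m::nat. m > 0 \<longrightarrow> mat_pow X m \<in> T \<longrightarrow> X \<in> T)"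

definition S_AB :: "('a::field^'n) set set \<Rightarrow> ('a^'n) set set \<Rightarrow> ('a^'n^'n) set" where
  "S_AB \<A> \<B> = {A. img A \<in> \<A> \<and> ker A \<in> \<B>}"

end

theory Submission
  imports Defs
begin


lemma line_eq:
  fixes L :: "('a::field^'n) set"
  assumes "vec.subspace L" "vec.dim L = 1" "w \<in> L" "w \<noteq> 0"
  shows "L = vec.span {w}"
proof -
  have "vec.span {w} \<subseteq> L" using assms by (intro vec.span_minimal) auto
  moreover have "vec.dim (vec.span {w}) = 1" using assms(4) by (simp add: vec.dim_span)
  ultimately show ?thesis using assms
    by (metis order_refl vec.subspace_dim_equal vec.subspace_span)
qed

lemma hyper_full:
  fixes H W :: "('a::field^'n) set"
  assumes "vec.subspace H" "vec.dim H = CARD('n) - 1" "vec.subspace W" "H \<subseteq> W" "W \<noteq> H"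
  shows "W = UNIV"
proof -
  have "vec.span H \<subset> vec.span W" using assms by (simp add: vec.span_eq_iff[THEN iffD2] psubset_eq)
  then have "vec.dim H < vec.dim W" by (rule vec.dim_psubset)
  then have "vec.dim (UNIV::('a^'n) set) \<le> vec.dim W" using assms(2) vec_dim_card[where 'a='a and 'n='n] by linarith
  then show ?thesis using assms(3) by (metis subset_UNIV vec.subspace_UNIV vec.subspace_dim_equal)
qed

lemma hyper_decomp:
  fixes H :: "('a::field^'n) set"
  assumes "vec.subspace H" "vec.dim H = CARD('n) - 1" "v \<notin> H"
  shows "\<exists>h\<in>H. \<exists>c. x = h + c *s v"
proof -
  have "vec.span (insert v H) = UNIV"
    apply (rule hyper_full[OF assms(1,2)])
    using assms vec.span_superset[of "insert v H"] by auto
  then have "x \<in> vec.span (insert v H)" by simp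
  then obtain k where "x - k *s v \<in> vec.span H" unfolding vec.span_insert by auto
  then have "x - k *s v \<in> H" using assms(1) by (simp add: vec.span_eq_iff[THEN iffD2])
  then show ?thesis by (intro bexI[of _ "x - k *s v"] exI[of _ k]) auto
qed

lemma mat_pow_0: "mat_pow X 0 = mat 1" by (simp add: mat_pow_def)
lemma mat_pow_Suc: "mat_pow X (Suc m) = X ** mat_pow X m" by (simp add: mat_pow_def)
lemma mat_pow_Suc': "mat_pow X (Suc m) = mat_pow X m ** (X::'a::semiring_1^'n^'n)"
  by (induction m) (simp_all add: mat_pow_0 mat_pow_Suc matrix_mul_assoc)

lemma subspace_ker: "vec.subspace (ker (A::'a::field^'n^'n))"
  unfolding ker_def by (rule vec.subspace_kernel)
lemma subspace_img: "vec.subspace (img (A::'a::field^'n^'n))"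
  unfolding img_def using vec.subspace_image[OF vec.subspace_UNIV] by simp


lemma closure:
  fixes \<A> \<B> :: "('a::field^'n) set set"
  assumes A3: "\<forall>V\<in>\<A>. vec.subspace V \<and> vec.dim V = CARD('n) - 1"
    and B5: "\<forall>V\<in>\<B>. vec.subspace V \<and> vec.dim V = 1"
    and C: "\<forall>V1\<in>\<B>. \<forall>V2\<in>\<A>. \<not> V1 \<subseteq> V2"
    and A: "A \<in> S_AB \<A> \<B>" and B: "B \<in> S_AB \<A> \<B>"
  shows "A ** B \<in> S_AB \<A> \<B>"
proof -
  have iA: "img A \<in> \<A>" and kA: "ker A \<in> \<B>" and iB: "img B \<in> \<A>" and kB: "ker B \<in> \<B>"
    using A B by (auto simp: S_AB_def)
  have k: "ker (A ** B) = ker B"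
  proof
    show "ker B \<subseteq> ker (A ** B)"
      by (auto simp: ker_def matrix_vector_mul_assoc[symmetric])
    show "ker (A ** B) \<subseteq> ker B"
    proof
      fix x assume "x \<in> ker (A ** B)"
      then have 1: "B *v x \<in> ker A" by (simp add: ker_def matrix_vector_mul_assoc)
      have 2: "B *v x \<in> img B" by (simp add: img_def)
      show "x \<in> ker B"
      proof (rule ccontr)
        assume "x \<notin> ker B"
        then have "B *v x \<noteq> 0" by (simp add: ker_def)
        then have "ker A = vec.span {B *v x}" using line_eq[OF _ _ 1] kA B5 by blast
        also have "\<dots> \<subseteq> img B" using 2 subspace_img by (intro vec.span_minimal) auto
        finally show False using C kA iB by blast
      qed
    qed
  qed
  have i: "img (A ** B) = img A"
  proof
    show "img (A ** B) \<subseteq> img A"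
      by (auto simp: img_def matrix_vector_mul_assoc[symmetric])
    show "img A \<subseteq> img (A ** B)"
    proof
      fix y assume "y \<in> img A"
      then obtain x where y: "y = A *v x" by (auto simp: img_def)
      obtain v where v: "v \<in> ker A" "v \<notin> img B" using C kA iB by blast
      obtain h c where h: "h \<in> img B" "x = h + c *s v"
        using hyper_decomp[of "img B" v x] A3 iB v by blast
      obtain z where z: "h = B *v z" using h by (auto simp: img_def)
      have "y = A *v h + c *s (A *v v)" using y h
        by (simp add: matrix_vector_right_distrib vec.scale)
      also have "\<dots> = (A ** B) *v z" using v z by (simp add: ker_def matrix_vector_mul_assoc)
      finally show "y \<in> img (A ** B)" by (simp add: img_def)
    qed
  qed
  show ?thesis using i k iA kB by (simp add: S_AB_def)
qed


lemma isol:
  fixes \<A> \<B> :: "('a::field^'n) set set"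
  assumes A3: "\<forall>V\<in>\<A>. vec.subspace V \<and> vec.dim V = CARD('n) - 1"
    and B5: "\<forall>V\<in>\<B>. vec.subspace V \<and> vec.dim V = 1"
  shows "isolated (S_AB \<A> \<B>)"
  unfolding isolated_def
proof (intro allI impI)
  fix X :: "'a^'n^'n" and m :: nat
  assume "m > 0" and P: "mat_pow X m \<in> S_AB \<A> \<B>"
  then obtain k where m: "m = Suc k" using gr0_implies_Suc by blast
  let ?P = "mat_pow X m"
  have iP: "img ?P \<in> \<A>" and kP: "ker ?P \<in> \<B>" using P by (auto simp: S_AB_def)
  have ksub: "ker X \<subseteq> ker ?P"
    by (auto simp: ker_def m mat_pow_Suc' matrix_vector_mul_assoc[symmetric])
  have isub: "img ?P \<subseteq> img X"
    by (auto simp: img_def m mat_pow_Suc matrix_vector_mul_assoc[symmetric])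
  have "\<exists>w. w \<in> ker X \<and> w \<noteq> 0"
  proof (rule ccontr)
    assume "\<not> ?thesis"
    then have inj: "\<And>x. X *v x = 0 \<Longrightarrow> x = 0" by (auto simp: ker_def)
    have "\<And>x. mat_pow X j *v x = 0 \<Longrightarrow> x = 0" for j
    proof (induction j)
      case 0 then show ?case by (simp add: mat_pow_0)
    next
      case (Suc j)
      have "X *v (mat_pow X j *v x) = 0" using Suc.prems by (simp add: mat_pow_Suc matrix_vector_mul_assoc)
      then show ?case using inj Suc.IH by blast
    qed
    then have "ker ?P = {0}" by (auto simp: ker_def)
    then show False using kP B5 by (metis vec.dim_singleton zero_neq_one)
  qed
  then obtain w where w: "w \<in> ker X" "w \<noteq> 0" by blast
  have "ker ?P = vec.span {w}" using line_eq[of "ker ?P" w] kP B5 ksub w by blast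
  also have "\<dots> \<subseteq> ker X" using w subspace_ker by (intro vec.span_minimal) auto
  finally have k: "ker X = ker ?P" using ksub by blast
  have i: "img X = img ?P"
  proof (rule ccontr)
    assume "img X \<noteq> img ?P"
    then have "img X = UNIV" using hyper_full[of "img ?P" "img X"] A3 iP subspace_img isub by blast
    then have surj: "\<And>y. \<exists>x. y = X *v x" by (auto simp: img_def)
    have "\<And>y. \<exists>x. y = mat_pow X j *v x" for j
    proof (induction j)
      case 0 then show ?case by (simp add: mat_pow_0)
    next
      case (Suc j)
      obtain x1 where "y = X *v x1" using surj by blast
      moreover obtain x2 where "x1 = mat_pow X j *v x2" using Suc by blast
      ultimately show ?case by (auto simp: mat_pow_Suc matrix_vector_mul_assoc)
    qed
    then have "img ?P = UNIV" unfolding img_def by (metis UNIV_eq_I rangeI)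
    then have "vec.dim (img ?P) = CARD('n)" by (metis vec_dim_card)
    moreover have "vec.dim (img ?P) = CARD('n) - 1" using A3 iP by blast
    moreover have "CARD('n) > 0" by simp
    ultimately show False by linarith
  qed
  show "X \<in> S_AB \<A> \<B>" using i k iP kP by (simp add: S_AB_def)
qed


lemma nonempty:
  fixes \<A> \<B> :: "('a::field^'n) set set"
  assumes A2: "\<A> \<noteq> {}" and A3: "\<forall>V\<in>\<A>. vec.subspace V \<and> vec.dim V = CARD('n) - 1"
    and B4: "\<B> \<noteq> {}" and B5: "\<forall>V\<in>\<B>. vec.subspace V \<and> vec.dim V = 1"
    and C: "\<forall>V1\<in>\<B>. \<forall>V2\<in>\<A>. \<not> V1 \<subseteq> V2"
  shows "S_AB \<A> \<B> \<noteq> {}"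
proof -
  obtain H L where H: "H \<in> \<A>" and L: "L \<in> \<B>" using A2 B4 by blast
  obtain v where v: "v \<in> L" "v \<notin> H" using C H L by blast
  have sH: "vec.subspace H" and dH: "vec.dim H = CARD('n) - 1" using A3 H by auto
  have v0: "v \<noteq> 0" using v sH by (metis vec.subspace_0)
  have sL: "vec.subspace L" and dL: "vec.dim L = 1" using B5 L by auto
  have Lv: "L = vec.span {v}" by (rule line_eq[OF sL dL v(1) v0])
  obtain BH where BH: "BH \<subseteq> H" "vec.independent BH" "H \<subseteq> vec.span BH" "card BH = vec.dim H"
    by (rule vec.basis_exists[of H])
  have spBH: "vec.span BH = H" using BH sH
    by (metis subset_antisym vec.span_minimal)
  have vBH: "v \<notin> BH" using BH v by blast
  have ind: "vec.independent (insert v BH)"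
    using BH spBH v by (intro vec.independent_insertI) auto
  define g where "g = (\<lambda>b::'a^'n. if b = v then 0 else b)"
  define f where "f = vec.construct (insert v BH) g"
  have lf: "Vector_Spaces.linear (*s) (*s) f" unfolding f_def by (rule vec.linear_construct[OF ind])
  have fb: "f b = g b" if "b \<in> insert v BH" for b
    unfolding f_def using vec.construct_basis[OF ind that] .
  have fv: "f v = 0" using fb by (simp add: g_def)
  have fH: "f h = h" if "h \<in> H" for h
  proof -
    have "f h = id h"
    proof (rule vec.linear_eq_on[where g=id and B=BH])
      show "Vector_Spaces.linear (*s) (*s) f" by (rule lf)
      show "Vector_Spaces.linear (*s) (*s) (id::'a^'n \<Rightarrow> 'a^'n)" by (rule vec.linear_id)
      show "h \<in> vec.span BH" using that spBH by simp
      fix b assume "b \<in> BH"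
      then show "f b = id b" using fb vBH by (auto simp: g_def)
    qed
    then show ?thesis by simp
  qed
  define M where "M = matrix f"
  have Mf: "M *v x = f x" for x unfolding M_def by (rule matrix_works[OF lf])
  have gimg: "g ` insert v BH = insert 0 BH" using vBH by (auto simp: g_def)
  have "img M = range f" by (simp add: img_def Mf)
  also have "\<dots> = vec.span (insert 0 BH)" unfolding f_def
    using vec.range_construct_eq_span[OF ind, of g] gimg by simp
  also have "\<dots> = H" using spBH by (simp add: vec.span_insert_0)
  finally have iM: "img M = H" .
  have kM: "ker M = L"
  proof
    show "L \<subseteq> ker M"
    proof -
      have "v \<in> ker M" using fv by (simp add: ker_def Mf)
      then show ?thesis unfolding Lv using subspace_ker[of M] by (intro vec.span_minimal) auto
    qed
    show "ker M \<subseteq> L"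
    proof
      fix x assume "x \<in> ker M"
      then have fx: "f x = 0" by (simp add: ker_def Mf)
      obtain h c where h: "h \<in> H" "x = h + c *s v" using hyper_decomp[OF sH dH v(2)] by blast
      have "f x = h" using h fH fv lf
        by (simp add: Vector_Spaces.linear_iff)
      then have "x = c *s v" using fx h by simp
      then show "x \<in> L" unfolding Lv by (simp add: vec.span_base vec.span_scale)
    qed
  qed
  have "M \<in> S_AB \<A> \<B>" using iM kM H L by (simp add: S_AB_def)
  then show ?thesis by blast
qed



theorem lemma26:
  fixes \<A> \<B> :: "('a::field^'n) set set"
  assumes "CARD('n) \<ge> 2"
    and "\<A> \<noteq> {}"
    and "\<forall>V\<in>\<A>. vec.subspace V \<and> vec.dim V = CARD('n) - 1"
    and "\<B> \<noteq> {}"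
    and "\<forall>V\<in>\<B>. vec.subspace V \<and> vec.dim V = 1"
    and "\<forall>V1\<in>\<B>. \<forall>V2\<in>\<A>. \<not> V1 \<subseteq> V2"
  shows "matrix_subsemigroup (S_AB \<A> \<B>) \<and> isolated (S_AB \<A> \<B>)"
  proof -
  have "\<forall>A\<in>S_AB \<A> \<B>. \<forall>B\<in>S_AB \<A> \<B>. A ** B \<in> S_AB \<A> \<B>"
    using closure[OF assms(3,5,6)] by simp
  then show ?thesis
    unfolding matrix_subsemigroup_def using isol[OF assms(3,5)] nonempty[OF assms(2-6)] by simp
qed

end
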